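(* The Volterra operator algebra $\mathcal A_V$ does not admit a gauge action.
   Context: $V$ is the Volterra operator on $L^2[0,1]$, $V\xi(x)=\int_0^x\xi(t)\,dt$, and $\mathcal A_V$ is the operator-norm closure in $\mathcal B(L^2[0,1])$ of the polynomials $p(V)$ with $p(0)=0$. A gauge action on $\mathcal A_V$ is a group homomorphism $\lambda\mapsto\gamma_\lambda$ from the unit circle $\mathbb T$ into the group of isometric algebra automorphisms of $\mathcal A_V$ such that $\gamma_\lambda(V)=\lambda V$ for all $\lambda\in\mathbb T$ and $\lambda\mapsto\gamma_\lambda(S)$ is norm continuous for every $S\in\mathcal A_V$. *)

theory Defs
  imports "HOL-Analysis.Analysis" "HOL-Computational_Algebra.Polynomial"
begin

text \<open>Elements of L^2[0,1] are represented by functions real => complex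
  (representatives); equality in L^2 is equality almost everywhere on [0,1].
  Operators are represented by maps on representatives; two operators are
  identified when they agree (a.e.) on every element of L^2.\<close>

type_synonym fn = "real \<Rightarrow> complex"
type_synonym op = "fn \<Rightarrow> fn"

definition M01 :: "real measure" where
  "M01 = restrict_space lborel {0..1}"

definition L2 :: "fn set" where
  "L2 = {f. f \<in> borel_measurable M01 \<and> integrable M01 (\<lambda>x. (cmod (f x))\<^sup>2)}"

definition l2norm :: "fn \<Rightarrow> real" where
  "l2norm f = sqrt (\<integral>x. (cmod (f x))\<^sup>2 \<partial>M01)"

definition opnorm :: "op \<Rightarrow> real" where
  "opnorm T = Sup {l2norm (T f) | f. f \<in> L2 \<and> l2norm f \<le> 1}"

definition opeq :: "op \<Rightarrow> op \<Rightarrow> bool" where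
  "opeq S T \<longleftrightarrow> (\<forall>f\<in>L2. AE x in M01. S f x = T f x)"

definition op_add :: "op \<Rightarrow> op \<Rightarrow> op" where
  "op_add S T = (\<lambda>f x. S f x + T f x)"

definition op_scale :: "complex \<Rightarrow> op \<Rightarrow> op" where
  "op_scale c S = (\<lambda>f x. c * S f x)"

definition volterra :: op where
  "volterra f = (\<lambda>x. LINT t:{0..x}|lborel. f t)"

definition poly_op :: "complex poly \<Rightarrow> op" where
  "poly_op p f = (\<lambda>x. \<Sum>k\<le>degree p. coeff p k * (volterra ^^ k) f x)"

definition AV :: "op set" where
  "AV = {S. (\<forall>f\<in>L2. S f \<in> L2)
          \<and> (\<forall>f\<in>L2. \<forall>g\<in>L2. (AE x in M01. f x = g x) \<longrightarrow> (AE x in M01. S f x = S g x))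
          \<and> (\<forall>\<epsilon>>0. \<exists>p. poly p 0 = 0 \<and>
                (\<forall>f\<in>L2. l2norm (\<lambda>x. S f x - poly_op p f x) \<le> \<epsilon> * l2norm f))}"

definition gauge_action :: "(complex \<Rightarrow> op \<Rightarrow> op) \<Rightarrow> bool" where
  "gauge_action \<gamma> \<longleftrightarrow>
    (\<forall>z. cmod z = 1 \<longrightarrow>
        (\<forall>S\<in>AV. \<gamma> z S \<in> AV)
      \<and> (\<forall>S\<in>AV. \<forall>T\<in>AV. opeq S T \<longrightarrow> opeq (\<gamma> z S) (\<gamma> z T))
      \<and> (\<forall>S\<in>AV. \<forall>T\<in>AV. opeq (\<gamma> z (op_add S T)) (op_add (\<gamma> z S) (\<gamma> z T)))
      \<and> (\<forall>c. \<forall>S\<in>AV. opeq (\<gamma> z (op_scale c S)) (op_scale c (\<gamma> z S)))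
      \<and> (\<forall>S\<in>AV. \<forall>T\<in>AV. opeq (\<gamma> z (S \<circ> T)) (\<gamma> z S \<circ> \<gamma> z T))
      \<and> (\<forall>S\<in>AV. \<forall>T\<in>AV. opeq (\<gamma> z S) (\<gamma> z T) \<longrightarrow> opeq S T)
      \<and> (\<forall>T\<in>AV. \<exists>S\<in>AV. opeq (\<gamma> z S) T)
      \<and> (\<forall>S\<in>AV. opnorm (\<gamma> z S) = opnorm S)
      \<and> opeq (\<gamma> z volterra) (op_scale z volterra))
    \<and> (\<forall>z w. cmod z = 1 \<longrightarrow> cmod w = 1 \<longrightarrow>
          (\<forall>S\<in>AV. opeq (\<gamma> (z * w) S) (\<gamma> z (\<gamma> w S))))
    \<and> (\<forall>S\<in>AV. \<forall>z0. cmod z0 = 1 \<longrightarrow>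
          (\<forall>\<epsilon>>0. \<exists>\<delta>>0. \<forall>z. cmod z = 1 \<and> cmod (z - z0) < \<delta> \<longrightarrow>
              opnorm (op_add (\<gamma> z S) (op_scale (-1) (\<gamma> z0 S))) < \<epsilon>))"

end

theory Submission
  imports Defs
begin


lemma pred_Icc1[measurable]: "Measurable.pred (borel \<Otimes>\<^sub>M borel) (\<lambda>x::real\<times>real. snd x \<in> {0..fst x})"
  unfolding atLeastAtMost_iff by measurable
lemma pred_Icc2[measurable]: "Measurable.pred (borel \<Otimes>\<^sub>M borel) (\<lambda>x::real\<times>real. fst x \<in> {0..snd x})"
  unfolding atLeastAtMost_iff by measurable

lemma space_M01[simp]: "space M01 = {0..1}"
  by (simp add: M01_def space_restrict_space)

lemma emeasure_M01: "emeasure M01 {0..1} = 1"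
  unfolding M01_def by (subst emeasure_restrict_space) auto

lemma finite_M01: "finite_measure M01"
  by (rule finite_measureI) (simp add: emeasure_M01)

lemma M01_sets: "{0..1::real} \<inter> space lborel \<in> sets lborel" by simp

definition fe :: "fn \<Rightarrow> fn" where "fe f t = indicator {0..1::real} t *\<^sub>R f t"

lemma le_1_sq: "(a::real) \<le> 1 + a\<^sup>2"
proof (cases "a \<le> 1")
  case True then show ?thesis by (smt (verit) zero_le_power2)
next
  case False then have "a \<le> a * a" by (simp add: mult_le_cancel_left1)
  then show ?thesis by (simp add: power2_eq_square)
qed

lemma fe_meas: "f \<in> L2 \<Longrightarrow> fe f \<in> borel_measurable lborel"
  using borel_measurable_restrict_space_iff[OF M01_sets, of f]
  by (simp add: L2_def M01_def fe_def[abs_def])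

lemma L2_int: assumes "f \<in> L2" shows "integrable M01 f"
proof -
  interpret finite_measure M01 by (rule finite_M01)
  have m: "f \<in> borel_measurable M01" and i: "integrable M01 (\<lambda>x. (cmod (f x))\<^sup>2)"
    using assms by (auto simp: L2_def)
  have "integrable M01 (\<lambda>x. 1 + (cmod (f x))\<^sup>2)" using i by simp
  then show ?thesis
    by (rule Bochner_Integration.integrable_bound[OF _ m]) (auto intro!: AE_I2 simp: le_1_sq)
qed

lemma fe_int: assumes "f \<in> L2" shows "integrable lborel (fe f)"
  using L2_int[OF assms] integrable_restrict_space[OF M01_sets, of f]
  by (simp add: M01_def fe_def[abs_def])

lemma fe_sq: "(cmod (fe f t))\<^sup>2 = indicator {0..1::real} t *\<^sub>R (cmod (f t))\<^sup>2"
  by (simp add: fe_def indicator_def)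

lemma fe_sq_int: assumes "f \<in> L2" shows "integrable lborel (\<lambda>t. (cmod (fe f t))\<^sup>2)"
  using assms integrable_restrict_space[OF M01_sets, of "\<lambda>t. (cmod (f t))\<^sup>2"]
  by (simp add: M01_def fe_sq L2_def)

lemma fe_sq_integral: "(\<integral>t. (cmod (fe f t))\<^sup>2 \<partial>lborel) = (\<integral>t. (cmod (f t))\<^sup>2 \<partial>M01)"
  using integral_restrict_space[OF M01_sets, of "\<lambda>t. (cmod (f t))\<^sup>2"]
  by (simp add: M01_def fe_sq)

lemma V_def': "volterra g x = (\<integral>t. indicator {0..x} t *\<^sub>R g t \<partial>lborel)"
  by (simp add: volterra_def set_lebesgue_integral_def)

lemma V_repr: assumes "x \<in> {0..1}" shows "volterra f x = (\<integral>t. indicator {0..x} t *\<^sub>R fe f t \<partial>lborel)"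
  unfolding V_def' using assms
  by (intro Bochner_Integration.integral_cong) (auto simp: fe_def indicator_def)

lemma Vt_meas: assumes [measurable]: "F \<in> borel_measurable lborel"
  shows "(\<lambda>x::real. \<integral>t. indicator {0..x} t *\<^sub>R (F t::complex) \<partial>lborel) \<in> borel_measurable lborel"
  by measurable

lemma Vt_bound: assumes "integrable lborel F"
  shows "cmod (\<integral>t. indicator {0..x::real} t *\<^sub>R (F t::complex) \<partial>lborel) \<le> (\<integral>t. cmod (F t) \<partial>lborel)"
proof -
  have "cmod (\<integral>t. indicator {0..x} t *\<^sub>R (F t::complex) \<partial>lborel) \<le> (\<integral>t. norm (indicator {0..x} t *\<^sub>R (F t::complex)) \<partial>lborel)"
    by (rule integral_norm_bound)
  also have "\<dots> \<le> (\<integral>t. cmod (F t) \<partial>lborel)"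
    using assms
    by (intro integral_mono integrable_norm integrable_mult_indicator) (auto simp: indicator_def atLeastAtMost_borel)
  finally show ?thesis .
qed

lemma L2_bounded: assumes "h \<in> borel_measurable M01" "\<forall>x\<in>{0..1}. cmod (h x) \<le> B"
  shows "h \<in> L2"
proof -
  interpret finite_measure M01 by (rule finite_M01)
  have "integrable M01 (\<lambda>x. (cmod (h x))\<^sup>2)"
  proof (rule integrable_const_bound[where B="B\<^sup>2"])
    show "AE x in M01. norm ((cmod (h x))\<^sup>2) \<le> B\<^sup>2"
      using assms(2) by (intro AE_I2) (auto intro!: power_mono)
  qed (use assms(1) in measurable)
  then show ?thesis using assms(1) by (simp add: L2_def)
qed

lemma V_meas: assumes "f \<in> L2" shows "volterra f \<in> borel_measurable M01"
proof -
  have "(\<lambda>x::real. \<integral>t. indicator {0..x} t *\<^sub>R fe f t \<partial>lborel) \<in> borel_measurable M01"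
    unfolding M01_def by (rule measurable_restrict_space1) (rule Vt_meas[OF fe_meas[OF assms]])
  then show ?thesis
    by (subst measurable_cong[where g="\<lambda>x::real. \<integral>t. indicator {0..x} t *\<^sub>R fe f t \<partial>lborel"])
       (auto simp: V_repr)
qed

lemma V_bdd: assumes "f \<in> L2" shows "\<forall>x\<in>{0..1}. cmod (volterra f x) \<le> (\<integral>t. cmod (fe f t) \<partial>lborel)"
  using Vt_bound[OF fe_int[OF assms]] by (simp add: V_repr)

lemma V_L2: assumes "f \<in> L2" shows "volterra f \<in> L2"
  by (rule L2_bounded[OF V_meas[OF assms] V_bdd[OF assms]])

lemma V_resp: assumes "f \<in> L2" "g \<in> L2" "AE x in M01. f x = g x" "x \<in> {0..1}"
  shows "volterra f x = volterra g x"
proof -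
  have "AE t in lborel. t \<in> {0..1} \<longrightarrow> f t = g t"
    using assms(3) unfolding M01_def by (simp add: AE_restrict_space_iff)
  then have "AE t in lborel. indicator {0..x} t *\<^sub>R fe f t = indicator {0..x} t *\<^sub>R fe g t"
    by eventually_elim (auto simp: fe_def indicator_def)
  then have "(\<integral>t. indicator {0..x} t *\<^sub>R fe f t \<partial>lborel) = (\<integral>t. indicator {0..x} t *\<^sub>R fe g t \<partial>lborel)"
    using fe_meas[OF assms(1)] fe_meas[OF assms(2)]
    by (intro integral_cong_AE) auto
  then show ?thesis using assms(4) by (simp add: V_repr)
qed



lemma int_ind_Icc: "(\<integral>y. indicator {a..b::real} y \<partial>lborel) = (if a \<le> b then b - a else 0)"
  by (cases "a \<le> b") auto

lemma VV_repr: assumes f: "f \<in> L2" and x: "x \<in> {0..1}"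
  shows "volterra (volterra f) x = (\<integral>t. indicator {0..x} t *\<^sub>R (complex_of_real (x - t) * fe f t) \<partial>lborel)"
proof -
  define G where "G = (\<lambda>t y. indicator {0..x} y *\<^sub>R indicator {0..y} t *\<^sub>R fe f t)"
  have Geq: "\<And>t y. G t y = (indicator {0..x} t * indicator {t..x} y) *\<^sub>R fe f t"
    by (auto simp: G_def indicator_def)
  have [measurable]: "fe f \<in> borel_measurable lborel" by (rule fe_meas[OF f])
  have inner: "\<And>t. (\<integral>y. G t y \<partial>lborel) = indicator {0..x} t *\<^sub>R (complex_of_real (x - t) * fe f t)"
  proof -
    fix t
    have "(\<integral>y. G t y \<partial>lborel) = (\<integral>y. (indicator {0..x} t * indicator {t..x} y) \<partial>lborel) *\<^sub>R fe f t"
      unfolding Geq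
      by (rule integral_scaleR_left) (auto simp: emeasure_lborel_Icc_eq)
    also have "\<dots> = indicator {0..x} t *\<^sub>R (complex_of_real (x - t) * fe f t)"
      by (cases "t \<in> {0..x}") (auto simp: int_ind_Icc scaleR_conv_of_real)
    finally show "(\<integral>y. G t y \<partial>lborel) = indicator {0..x} t *\<^sub>R (complex_of_real (x - t) * fe f t)" .
  qed
  have innern: "\<And>t. (\<integral>y. norm (G t y) \<partial>lborel) = indicator {0..x} t * (x - t) * cmod (fe f t)"
  proof -
    fix t
    have "(\<lambda>y. norm (G t y)) = (\<lambda>y. indicator {t..x} y * (indicator {0..x} t * cmod (fe f t)))"
      by (auto simp: Geq fun_eq_iff indicator_def)
    then have "(\<integral>y. norm (G t y) \<partial>lborel) = (\<integral>y. indicator {t..x} y \<partial>lborel) * (indicator {0..x} t * cmod (fe f t))"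
      by simp
    also have "\<dots> = indicator {0..x} t * (x - t) * cmod (fe f t)"
      by (cases "t \<in> {0..x}") (auto simp: int_ind_Icc)
    finally show "(\<integral>y. norm (G t y) \<partial>lborel) = indicator {0..x} t * (x - t) * cmod (fe f t)" .
  qed
  have int: "integrable (lborel \<Otimes>\<^sub>M lborel) (case_prod G)"
  proof (rule lborel_pair.Fubini_integrable)
    show "case_prod G \<in> borel_measurable (lborel \<Otimes>\<^sub>M lborel)"
      unfolding G_def by measurable
    have "integrable lborel (\<lambda>t. indicator {0..x} t * (x - t) * cmod (fe f t))"
    proof (rule Bochner_Integration.integrable_bound[OF integrable_norm[OF fe_int[OF f]]])
      show "(\<lambda>t. indicator {0..x} t * (x - t) * cmod (fe f t)) \<in> borel_measurable lborel"
        by measurable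
      have pt: "\<And>t. norm (indicator {0..x} t * (x - t) * cmod (fe f t)) \<le> norm (fe f t)"
      proof -
        fix t
        have "\<bar>indicator {0..x} t * (x - t)\<bar> \<le> 1" using x by (auto simp: indicator_def)
        then show "norm (indicator {0..x} t * (x - t) * cmod (fe f t)) \<le> norm (fe f t)"
          by (simp add: abs_mult) (metis mult_right_le_one_le norm_ge_zero abs_ge_zero indicator_pos_le mult_nonneg_nonneg mult.commute)
      qed
      show "AE t in lborel. norm (indicator {0..x} t * (x - t) * cmod (fe f t)) \<le> norm (cmod (fe f t))"
        using pt by (intro AE_I2) simp
    qed
    then show "integrable lborel (\<lambda>t. \<integral>y. norm (case_prod G (t, y)) \<partial>lborel)"
      by (simp add: innern)
    show "AE t in lborel. integrable lborel (\<lambda>y. case_prod G (t, y))"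
      by (intro AE_I2) (auto simp: Geq emeasure_lborel_Icc_eq)
  qed
  have "volterra (volterra f) x = (\<integral>y. indicator {0..x} y *\<^sub>R volterra f y \<partial>lborel)"
    by (rule V_def')
  also have "\<dots> = (\<integral>y. (\<integral>t. G t y \<partial>lborel) \<partial>lborel)"
  proof (rule Bochner_Integration.integral_cong)
    fix y
    show "indicator {0..x} y *\<^sub>R volterra f y = (\<integral>t. G t y \<partial>lborel)"
      by (cases "y \<in> {0..x}") (use x in \<open>auto simp: G_def V_repr\<close>)
  qed simp
  also have "\<dots> = (\<integral>t. (\<integral>y. G t y \<partial>lborel) \<partial>lborel)"
    by (rule lborel_pair.Fubini_integral[OF int])
  also have "\<dots> = (\<integral>t. indicator {0..x} t *\<^sub>R (complex_of_real (x - t) * fe f t) \<partial>lborel)"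
    by (simp add: inner)
  finally show ?thesis .
qed



lemma two_le_sq: "2 * (h::real) \<le> 1 + h\<^sup>2"
  using zero_le_power2[of "h - 1"] by (simp add: power2_diff)

lemma int_kernel:
  assumes f: "f \<in> L2" and [measurable]: "k \<in> borel_measurable borel"
    and kb: "\<forall>t\<in>{0..x::real}. cmod (k t) \<le> C"
  shows "integrable lborel (\<lambda>t. indicator {0..x} t *\<^sub>R (k t * fe f t))"
proof (rule Bochner_Integration.integrable_bound[OF integrable_mult_right[OF integrable_norm[OF fe_int[OF f]], of C]])
  have [measurable]: "fe f \<in> borel_measurable lborel" by (rule fe_meas[OF f])
  show "(\<lambda>t. indicator {0..x} t *\<^sub>R (k t * fe f t)) \<in> borel_measurable lborel" by measurable
  have pt: "\<And>t. norm (indicator {0..x} t *\<^sub>R (k t * fe f t)) \<le> norm (C * cmod (fe f t))"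
  proof -
    fix t
    show "norm (indicator {0..x} t *\<^sub>R (k t * fe f t)) \<le> norm (C * cmod (fe f t))"
    proof (cases "t \<in> {0..x}")
      case True
      then have "cmod (k t) \<le> C" using kb by auto
      then show ?thesis using True by (simp add: norm_mult mult_right_mono abs_mult)
    qed simp
  qed
  show "AE t in lborel. norm (indicator {0..x} t *\<^sub>R (k t * fe f t)) \<le> norm (C * cmod (fe f t))"
    using pt by (intro AE_I2) simp
qed

lemma kernel_bound:
  assumes f: "f \<in> L2" and x: "x \<in> {0..1}" and [measurable]: "k \<in> borel_measurable borel"
    and kb: "\<forall>t\<in>{0..x::real}. cmod (k t) \<le> C"
  shows "cmod (\<integral>t. indicator {0..x} t *\<^sub>R (k t * fe f t) \<partial>lborel) \<le> C / 2 * (x + (\<integral>t. (cmod (f t))\<^sup>2 \<partial>M01))"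
proof -
  have C0: "0 \<le> C" using kb x by (metis atLeastAtMost_iff norm_ge_zero order.trans order_refl)
  have [measurable]: "fe f \<in> borel_measurable lborel" by (rule fe_meas[OF f])
  have "cmod (\<integral>t. indicator {0..x} t *\<^sub>R (k t * fe f t) \<partial>lborel) \<le> (\<integral>t. norm (indicator {0..x} t *\<^sub>R (k t * fe f t)) \<partial>lborel)"
    by (rule integral_norm_bound)
  also have "\<dots> \<le> (\<integral>t. C / 2 * (indicator {0..x} t + (cmod (fe f t))\<^sup>2) \<partial>lborel)"
  proof (rule integral_mono)
    show "integrable lborel (\<lambda>t. norm (indicator {0..x} t *\<^sub>R (k t * fe f t)))"
      by (rule integrable_norm[OF int_kernel[OF f _ kb]]) simp
    show "integrable lborel (\<lambda>t. C / 2 * (indicator {0..x} t + (cmod (fe f t))\<^sup>2))"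
      using fe_sq_int[OF f] by (intro integrable_mult_right Bochner_Integration.integrable_add) (auto simp: emeasure_lborel_Icc_eq)
    fix t
    show "norm (indicator {0..x} t *\<^sub>R (k t * fe f t)) \<le> C / 2 * (indicator {0..x} t + (cmod (fe f t))\<^sup>2)"
    proof (cases "t \<in> {0..x}")
      case True
      then have "cmod (k t) \<le> C" using kb by auto
      then have "cmod (k t) * cmod (fe f t) \<le> C * cmod (fe f t)" by (simp add: mult_right_mono)
      also have "\<dots> \<le> C / 2 * (1 + (cmod (fe f t))\<^sup>2)"
      proof -
        have "C * (2 * cmod (fe f t)) \<le> C * (1 + (cmod (fe f t))\<^sup>2)"
          by (rule mult_left_mono[OF two_le_sq C0])
        moreover have "C / 2 * (1 + (cmod (fe f t))\<^sup>2) = C * (1 + (cmod (fe f t))\<^sup>2) / 2" by simp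
        ultimately show ?thesis by linarith
      qed
      finally show ?thesis using True by (simp add: norm_mult)
    next
      case False
      then show ?thesis using C0 by simp
    qed
  qed
  also have "\<dots> = C / 2 * (x + (\<integral>t. (cmod (f t))\<^sup>2 \<partial>M01))"
    using fe_sq_int[OF f] x
    by (simp add: Bochner_Integration.integral_add emeasure_lborel_Icc_eq fe_sq_integral)
  finally show ?thesis .
qed

lemma comb:
  assumes f: "f \<in> L2" and x: "x \<in> {0..1}"
  shows "volterra f x + c * volterra (volterra f) x =
    (\<integral>t. indicator {0..x} t *\<^sub>R ((1 + c * complex_of_real (x - t)) * fe f t) \<partial>lborel)"
proof -
  have [measurable]: "fe f \<in> borel_measurable lborel" by (rule fe_meas[OF f])
  have i1: "integrable lborel (\<lambda>t. indicator {0..x} t *\<^sub>R fe f t)"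
    by (rule integrable_mult_indicator[OF _ fe_int[OF f]]) simp
  have i2: "integrable lborel (\<lambda>t. indicator {0..x} t *\<^sub>R (complex_of_real (x - t) * fe f t))"
    by (rule int_kernel[OF f _, of _ x 1]) (use x in \<open>auto simp flip: of_real_diff\<close>)
  have "volterra f x + c * volterra (volterra f) x =
     (\<integral>t. indicator {0..x} t *\<^sub>R fe f t \<partial>lborel) + (\<integral>t. c * (indicator {0..x} t *\<^sub>R (complex_of_real (x - t) * fe f t)) \<partial>lborel)"
    unfolding V_repr[OF x, of f] VV_repr[OF f x] integral_mult_right_zero by (rule refl)
  also have "\<dots> = (\<integral>t. indicator {0..x} t *\<^sub>R fe f t + c * (indicator {0..x} t *\<^sub>R (complex_of_real (x - t) * fe f t)) \<partial>lborel)"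
    by (rule Bochner_Integration.integral_add[symmetric, OF i1 integrable_mult_right[OF i2]])
  also have "\<dots> = (\<integral>t. indicator {0..x} t *\<^sub>R ((1 + c * complex_of_real (x - t)) * fe f t) \<partial>lborel)"
    by (rule Bochner_Integration.integral_cong) (auto simp: algebra_simps scaleR_conv_of_real)
  finally show ?thesis .
qed



lemma l2norm_nonneg: "0 \<le> l2norm f"
  unfolding l2norm_def by (simp add: Bochner_Integration.integral_nonneg)

lemma L2_meas: "f \<in> L2 \<Longrightarrow> f \<in> borel_measurable M01" by (simp add: L2_def)

lemma L2_scale: assumes "h \<in> L2" shows "(\<lambda>x. c * h x) \<in> L2"
proof -
  have [measurable]: "h \<in> borel_measurable M01" using assms by (simp add: L2_def)
  have "integrable M01 (\<lambda>x. (cmod c)\<^sup>2 * (cmod (h x))\<^sup>2)" using assms by (simp add: L2_def)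
  then show ?thesis by (simp add: L2_def norm_mult power_mult_distrib)
qed

lemma L2_add: assumes "a \<in> L2" "b \<in> L2" shows "(\<lambda>x. a x + b x) \<in> L2"
proof -
  have [measurable]: "a \<in> borel_measurable M01" "b \<in> borel_measurable M01" using assms by (auto simp: L2_def)
  have "integrable M01 (\<lambda>x. 2 * (cmod (a x))\<^sup>2 + 2 * (cmod (b x))\<^sup>2)" using assms by (simp add: L2_def)
  then have "integrable M01 (\<lambda>x. (cmod (a x + b x))\<^sup>2)"
  proof (rule Bochner_Integration.integrable_bound)
    show "(\<lambda>x. (cmod (a x + b x))\<^sup>2) \<in> borel_measurable M01" by measurable
    have pt: "\<And>x. (cmod (a x + b x))\<^sup>2 \<le> 2 * (cmod (a x))\<^sup>2 + 2 * (cmod (b x))\<^sup>2"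
    proof -
      fix x
      have "cmod (a x + b x) \<le> cmod (a x) + cmod (b x)" by (rule norm_triangle_ineq)
      then have "(cmod (a x + b x))\<^sup>2 \<le> (cmod (a x) + cmod (b x))\<^sup>2" by (simp add: power_mono)
      also have "\<dots> \<le> 2 * (cmod (a x))\<^sup>2 + 2 * (cmod (b x))\<^sup>2"
        using zero_le_power2[of "cmod (a x) - cmod (b x)"] by (simp add: power2_diff power2_sum)
      finally show "(cmod (a x + b x))\<^sup>2 \<le> 2 * (cmod (a x))\<^sup>2 + 2 * (cmod (b x))\<^sup>2" .
    qed
    show "AE x in M01. norm ((cmod (a x + b x))\<^sup>2) \<le> norm (2 * (cmod (a x))\<^sup>2 + 2 * (cmod (b x))\<^sup>2)"
      using pt by (intro AE_I2) simp
  qed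
  then show ?thesis by (simp add: L2_def)
qed

lemma l2norm_zero: "l2norm (\<lambda>x. 0) = 0"
  by (simp add: l2norm_def)

lemma AV_intro:
  assumes a1: "\<forall>f\<in>L2. S f \<in> L2"
    and a2: "\<forall>f\<in>L2. \<forall>g\<in>L2. (AE x in M01. f x = g x) \<longrightarrow> (\<forall>x\<in>{0..1}. S f x = S g x)"
    and a3: "poly p 0 = 0" and a4: "\<And>f x. S f x = poly_op p f x"
  shows "S \<in> AV"
proof -
  have b2: "\<forall>f\<in>L2. \<forall>g\<in>L2. (AE x in M01. f x = g x) \<longrightarrow> (AE x in M01. S f x = S g x)"
  proof (intro ballI impI)
    fix f g assume "f \<in> L2" "g \<in> L2" "AE x in M01. f x = g x"
    then have "\<forall>x\<in>{0..1}. S f x = S g x" using a2 by blast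
    then show "AE x in M01. S f x = S g x" by (intro AE_I2) simp
  qed
  have b3: "\<forall>\<epsilon>>0. \<exists>p. poly p 0 = 0 \<and> (\<forall>f\<in>L2. l2norm (\<lambda>x. S f x - poly_op p f x) \<le> \<epsilon> * l2norm f)"
  proof (intro allI impI)
    fix \<epsilon> :: real assume e: "\<epsilon> > 0"
    have "\<forall>f\<in>L2. l2norm (\<lambda>x. S f x - poly_op p f x) \<le> \<epsilon> * l2norm f"
    proof
      fix f assume "f \<in> L2"
      have "(\<lambda>x. S f x - poly_op p f x) = (\<lambda>x. 0)" by (simp only: a4) simp
      then show "l2norm (\<lambda>x. S f x - poly_op p f x) \<le> \<epsilon> * l2norm f"
        using e l2norm_nonneg[of f] by (simp add: l2norm_zero)
    qed
    then show "\<exists>p. poly p 0 = 0 \<and> (\<forall>f\<in>L2. l2norm (\<lambda>x. S f x - poly_op p f x) \<le> \<epsilon> * l2norm f)"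
      using a3 by blast
  qed
  show ?thesis unfolding AV_def using a1 b2 b3 by blast
qed




lemma po1: "poly_op [:0,1:] f x = volterra f x"
  by (simp add: poly_op_def atMost_Suc)

lemma po2: "c \<noteq> 0 \<Longrightarrow> poly_op [:0,b,c:] f x = b * volterra f x + c * volterra (volterra f) x"
  by (simp add: poly_op_def numeral_2_eq_2 atMost_Suc)

lemma V_resp_all: "\<forall>f\<in>L2. \<forall>g\<in>L2. (AE x in M01. f x = g x) \<longrightarrow> (\<forall>x\<in>{0..1}. volterra f x = volterra g x)"
proof (intro ballI impI)
  fix f g and x :: real assume "f \<in> L2" "g \<in> L2" "AE x in M01. f x = g x" "x \<in> {0..1}"
  then show "volterra f x = volterra g x" by (rule V_resp)
qed

lemma VV_resp_all: "\<forall>f\<in>L2. \<forall>g\<in>L2. (AE x in M01. f x = g x) \<longrightarrow> (\<forall>x\<in>{0..1}. volterra (volterra f) x = volterra (volterra g) x)"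
proof (intro ballI impI)
  fix f g and x :: real assume f: "f \<in> L2" and g: "g \<in> L2" and ae: "AE x in M01. f x = g x" and x: "x \<in> {0..1}"
  have "AE x in M01. volterra f x = volterra g x"
    using V_resp[OF f g ae] by (intro AE_I2) auto
  then show "volterra (volterra f) x = volterra (volterra g) x"
    using V_resp[OF V_L2[OF f] V_L2[OF g] _ x] by blast
qed

lemma V_AV: "volterra \<in> AV"
proof (rule AV_intro[where p="[:0,1:]"])
  show "\<forall>f\<in>L2. volterra f \<in> L2" using V_L2 by blast
  show "\<forall>f\<in>L2. \<forall>g\<in>L2. (AE x in M01. f x = g x) \<longrightarrow> (\<forall>x\<in>{0..1}. volterra f x = volterra g x)"
    by (rule V_resp_all)
qed (simp_all add: po1)

lemma VV_AV: "volterra \<circ> volterra \<in> AV"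
proof (rule AV_intro[where p="[:0,0,1:]"])
  show "\<forall>f\<in>L2. (volterra \<circ> volterra) f \<in> L2" using V_L2 by simp
  show "\<forall>f\<in>L2. \<forall>g\<in>L2. (AE x in M01. f x = g x) \<longrightarrow> (\<forall>x\<in>{0..1}. (volterra \<circ> volterra) f x = (volterra \<circ> volterra) g x)"
    using VV_resp_all by (simp only: o_apply)
qed (simp_all add: po2)

lemma mVV_AV: "op_scale (-1) (volterra \<circ> volterra) \<in> AV"
proof (rule AV_intro[where p="[:0,0,-1:]"])
  show "\<forall>f\<in>L2. op_scale (-1) (volterra \<circ> volterra) f \<in> L2"
  proof
    fix f assume f: "f \<in> L2"
    show "op_scale (-1) (volterra \<circ> volterra) f \<in> L2"
      unfolding op_scale_def o_apply by (rule L2_scale[OF V_L2[OF V_L2[OF f]]])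
  qed
  show "\<forall>f\<in>L2. \<forall>g\<in>L2. (AE x in M01. f x = g x) \<longrightarrow> (\<forall>x\<in>{0..1}. op_scale (-1) (volterra \<circ> volterra) f x = op_scale (-1) (volterra \<circ> volterra) g x)"
    using VV_resp_all unfolding o_apply op_scale_def by metis
qed (simp_all add: po2 op_scale_def)

definition Sop :: op where "Sop = op_add volterra (op_scale (-1) (volterra \<circ> volterra))"

lemma Sop_eval: "Sop f x = volterra f x + (-1) * volterra (volterra f) x"
  by (simp add: Sop_def op_add_def op_scale_def)

lemma S_AV: "Sop \<in> AV"
proof (rule AV_intro[where p="[:0,1,-1:]"])
  show "\<forall>f\<in>L2. Sop f \<in> L2"
  proof
    fix f assume f: "f \<in> L2"
    have eq: "Sop f = (\<lambda>x. volterra f x + -1 * volterra (volterra f) x)" by (rule ext) (rule Sop_eval)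
    show "Sop f \<in> L2" unfolding eq by (rule L2_add[OF V_L2[OF f] L2_scale[OF V_L2[OF V_L2[OF f]]]])
  qed
  show "\<forall>f\<in>L2. \<forall>g\<in>L2. (AE x in M01. f x = g x) \<longrightarrow> (\<forall>x\<in>{0..1}. Sop f x = Sop g x)"
  proof (intro ballI impI)
    fix f g and x :: real assume f: "f \<in> L2" and g: "g \<in> L2" and ae: "AE x in M01. f x = g x" and x: "x \<in> {0..1}"
    have "volterra f x = volterra g x" using V_resp_all f g ae x by blast
    moreover have "volterra (volterra f) x = volterra (volterra g) x" using VV_resp_all f g ae x by blast
    ultimately show "Sop f x = Sop g x" by (simp only: Sop_eval)
  qed
qed (simp_all add: Sop_eval po2)



lemma opeq_trans: "opeq P Q \<Longrightarrow> opeq Q R \<Longrightarrow> opeq P R"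
  unfolding opeq_def
proof
  fix f assume a: "\<forall>f\<in>L2. AE x in M01. P f x = Q f x" "\<forall>f\<in>L2. AE x in M01. Q f x = R f x" and f: "f \<in> L2"
  from a(1) f have "AE x in M01. P f x = Q f x" by blast
  moreover from a(2) f have "AE x in M01. Q f x = R f x" by blast
  ultimately show "AE x in M01. P f x = R f x" by eventually_elim simp
qed

lemma opeq_add: "opeq P P' \<Longrightarrow> opeq Q Q' \<Longrightarrow> opeq (op_add P Q) (op_add P' Q')"
  unfolding opeq_def
proof
  fix f assume a: "\<forall>f\<in>L2. AE x in M01. P f x = P' f x" "\<forall>f\<in>L2. AE x in M01. Q f x = Q' f x" and f: "f \<in> L2"
  from a(1) f have "AE x in M01. P f x = P' f x" by blast
  moreover from a(2) f have "AE x in M01. Q f x = Q' f x" by blast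
  ultimately show "AE x in M01. op_add P Q f x = op_add P' Q' f x" by eventually_elim (simp add: op_add_def)
qed

lemma opeq_scale: "opeq P P' \<Longrightarrow> opeq (op_scale c P) (op_scale c P')"
  unfolding opeq_def
proof
  fix f assume a: "\<forall>f\<in>L2. AE x in M01. P f x = P' f x" and f: "f \<in> L2"
  from a(1) f have "AE x in M01. P f x = P' f x" by blast
  then show "AE x in M01. op_scale c P f x = op_scale c P' f x" by eventually_elim (simp add: op_scale_def)
qed

lemma opeq_comp:
  assumes "opeq P P'" "opeq Q Q'" "\<forall>f\<in>L2. Q f \<in> L2" "\<forall>f\<in>L2. Q' f \<in> L2"
    "\<forall>f\<in>L2. \<forall>g\<in>L2. (AE x in M01. f x = g x) \<longrightarrow> (AE x in M01. P f x = P g x)"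
  shows "opeq (P \<circ> Q) (P' \<circ> Q')"
  unfolding opeq_def
proof
  fix f assume f: "f \<in> L2"
  have q: "Q f \<in> L2" "Q' f \<in> L2" using assms(3,4) f by auto
  have "AE x in M01. Q f x = Q' f x" using assms(2) f by (auto simp: opeq_def)
  then have "AE x in M01. P (Q f) x = P (Q' f) x" using assms(5) q by blast
  moreover have "AE x in M01. P (Q' f) x = P' (Q' f) x" using assms(1) q by (auto simp: opeq_def)
  ultimately show "AE x in M01. (P \<circ> Q) f x = (P' \<circ> Q') f x" by eventually_elim simp
qed

lemma AV_L2: "S \<in> AV \<Longrightarrow> \<forall>f\<in>L2. S f \<in> L2" by (simp add: AV_def)
lemma AV_resp: "S \<in> AV \<Longrightarrow> \<forall>f\<in>L2. \<forall>g\<in>L2. (AE x in M01. f x = g x) \<longrightarrow> (AE x in M01. S f x = S g x)"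
  by (simp add: AV_def)

lemma l2norm_cong: assumes "f \<in> L2" "g \<in> L2" "AE x in M01. f x = g x" shows "l2norm f = l2norm g"
proof -
  have [measurable]: "f \<in> borel_measurable M01" "g \<in> borel_measurable M01" using assms by (auto simp: L2_def)
  have "(\<integral>x. (cmod (f x))\<^sup>2 \<partial>M01) = (\<integral>x. (cmod (g x))\<^sup>2 \<partial>M01)"
    by (rule integral_cong_AE) (use assms(3) in \<open>auto elim: AE_mp\<close>)
  then show ?thesis by (simp add: l2norm_def)
qed

lemma opnorm_cong: assumes "opeq P Q" "\<forall>f\<in>L2. P f \<in> L2" "\<forall>f\<in>L2. Q f \<in> L2"
  shows "opnorm P = opnorm Q"
proof -
  have eq: "\<And>f. f \<in> L2 \<Longrightarrow> l2norm (P f) = l2norm (Q f)"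
    using assms by (intro l2norm_cong) (auto simp: opeq_def)
  have "{l2norm (P f) | f. f \<in> L2 \<and> l2norm f \<le> 1} = {l2norm (Q f) | f. f \<in> L2 \<and> l2norm f \<le> 1}"
    by (rule Collect_cong) (metis eq)
  then show ?thesis by (simp add: opnorm_def)
qed



lemma M01_int: "(\<integral>x. g x \<partial>M01) = (\<integral>x. g x * indicator {0..1} x \<partial>lborel)" for g :: "real \<Rightarrow> real"
  unfolding M01_def by (subst integral_restrict_space) (auto simp: mult.commute)

lemma int_poly1: "(\<integral>x. ((x + 1) / 2)\<^sup>2 \<partial>M01) = 7 / 12"
proof -
  have "(\<integral>x. ((x + 1) / 2)\<^sup>2 * indicator {0..1} x \<partial>lborel) = (\<lambda>x::real. (x + 1)^3 / 12) 1 - (\<lambda>x::real. (x + 1)^3 / 12) 0"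
  proof (rule integral_FTC_Icc_real)
    fix x :: real
    show "((\<lambda>x::real. (x + 1)^3 / 12) has_real_derivative ((x + 1) / 2)\<^sup>2) (at x)"
      by (auto intro!: derivative_eq_intros simp: power2_eq_square field_simps)
    show "isCont (\<lambda>x::real. ((x + 1) / 2)\<^sup>2) x" by (intro continuous_intros) auto
  qed simp
  then show ?thesis by (simp add: M01_int)
qed

lemma int_poly2: "(\<integral>x. (x + x\<^sup>2 / 2)\<^sup>2 \<partial>M01) = 19 / 30"
proof -
  have "(\<integral>x. (x + x\<^sup>2 / 2)\<^sup>2 * indicator {0..1} x \<partial>lborel) = (\<lambda>x::real. x^3/3 + x^4/4 + x^5/20) 1 - (\<lambda>x::real. x^3/3 + x^4/4 + x^5/20) 0"
  proof (rule integral_FTC_Icc_real)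
    fix x :: real
    show "((\<lambda>x::real. x^3/3 + x^4/4 + x^5/20) has_real_derivative (x + x\<^sup>2 / 2)\<^sup>2) (at x)"
      by (auto intro!: derivative_eq_intros simp: power2_eq_square field_simps eval_nat_numeral)
    show "isCont (\<lambda>x::real. (x + x\<^sup>2 / 2)\<^sup>2) x" by (intro continuous_intros) auto
  qed simp
  then show ?thesis by (simp add: M01_int)
qed

lemma measure_M01: "measure M01 {0..1} = 1"
  by (simp add: measure_def emeasure_M01)

lemma int_const_M01: "(\<integral>x. c \<partial>M01) = (c::real)"
  using measure_M01 by simp

lemma poly_meas_M01:
  assumes "(g::real\<Rightarrow>real) \<in> borel_measurable borel" shows "g \<in> borel_measurable M01"
  unfolding M01_def by (rule measurable_restrict_space1) (simp add: assms)

lemma l2norm_le: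
  assumes h: "h \<in> L2" and hb: "\<forall>x\<in>{0..1}. cmod (h x) \<le> b x" and b0: "\<forall>x\<in>{0..1}. 0 \<le> b x"
    and bi: "integrable M01 (\<lambda>x. (b x)\<^sup>2)"
  shows "l2norm h \<le> sqrt (\<integral>x. (b x)\<^sup>2 \<partial>M01)"
  unfolding l2norm_def
proof (rule real_sqrt_le_mono, rule integral_mono)
  show "integrable M01 (\<lambda>x. (cmod (h x))\<^sup>2)" using h by (simp add: L2_def)
  show "integrable M01 (\<lambda>x. (b x)\<^sup>2)" by fact
  fix x assume "x \<in> space M01"
  then show "(cmod (h x))\<^sup>2 \<le> (b x)\<^sup>2" using hb by (auto intro!: power_mono)
qed

lemma V_scale: "volterra (\<lambda>y. c * g y) x = c * volterra g x"
proof -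
  have "(\<lambda>t. indicator {0..x} t *\<^sub>R (c * g t)) = (\<lambda>t. c * (indicator {0..x} t *\<^sub>R g t))"
    by (auto simp: fun_eq_iff)
  then show ?thesis unfolding V_def' by (simp only:) (rule integral_mult_right_zero)
qed

lemma V_neg: "volterra (\<lambda>y. - g y) x = - volterra g x"
  using V_scale[of "-1" g x] by simp

definition Wop :: op where
  "Wop = op_add (op_scale (-1) volterra) (op_scale (-1) ((op_scale (-1) volterra) \<circ> (op_scale (-1) volterra)))"

lemma W_eval: "Wop f x = -1 * (volterra f x + volterra (volterra f) x)"
  by (simp add: Wop_def op_add_def op_scale_def V_neg)

lemma W_L2: assumes f: "f \<in> L2" shows "Wop f \<in> L2"
proof -
  have eq: "Wop f = (\<lambda>x. -1 * (volterra f x + volterra (volterra f) x))" by (rule ext) (rule W_eval)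
  show ?thesis unfolding eq by (rule L2_scale[OF L2_add[OF V_L2[OF f] V_L2[OF V_L2[OF f]]]])
qed

lemma N_le: assumes "l2norm f \<le> 1" shows "(\<integral>t. (cmod (f t))\<^sup>2 \<partial>M01) \<le> 1"
  using assms by (simp add: l2norm_def)

lemma N_ge: "0 \<le> (\<integral>t. (cmod (f t))\<^sup>2 \<partial>M01)"
  by (simp add: Bochner_Integration.integral_nonneg)

lemma S_pt: assumes f: "f \<in> L2" and n: "l2norm f \<le> 1" and x: "x \<in> {0..1}"
  shows "cmod (Sop f x) \<le> (x + 1) / 2"
proof -
  have "Sop f x = (\<integral>t. indicator {0..x} t *\<^sub>R (complex_of_real (1 - (x - t)) * fe f t) \<partial>lborel)"
    unfolding Sop_eval comb[OF f x] by (simp add: algebra_simps)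
  also have "cmod \<dots> \<le> 1 / 2 * (x + (\<integral>t. (cmod (f t))\<^sup>2 \<partial>M01))"
  proof (rule kernel_bound[OF f x])
    show "\<forall>t\<in>{0..x}. cmod (complex_of_real (1 - (x - t))) \<le> 1"
    proof
      fix t assume "t \<in> {0..x}"
      then have "\<bar>1 - (x - t)\<bar> \<le> 1" using x by auto
      then show "cmod (complex_of_real (1 - (x - t))) \<le> 1" by (simp only: norm_of_real)
    qed
  qed simp
  also have "\<dots> \<le> (x + 1) / 2" using N_le[OF n] by simp
  finally show ?thesis .
qed

lemma W_pt: assumes f: "f \<in> L2" and n: "l2norm f \<le> 1" and x: "x \<in> {0..1}"
  shows "cmod (Wop f x) \<le> 2"
proof -
  have "cmod (Wop f x) = cmod (- (volterra f x + 1 * volterra (volterra f) x))"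
    by (simp only: W_eval mult_1 mult_minus1)
  also have "\<dots> = cmod (volterra f x + 1 * volterra (volterra f) x)"
    by (rule norm_minus_cancel)
  also have "\<dots> = cmod (\<integral>t. indicator {0..x} t *\<^sub>R (complex_of_real (1 + (x - t)) * fe f t) \<partial>lborel)"
    unfolding comb[OF f x] by (simp add: algebra_simps)
  also have "\<dots> \<le> 2 / 2 * (x + (\<integral>t. (cmod (f t))\<^sup>2 \<partial>M01))"
  proof (rule kernel_bound[OF f x])
    show "\<forall>t\<in>{0..x}. cmod (complex_of_real (1 + (x - t))) \<le> 2"
    proof
      fix t assume "t \<in> {0..x}"
      then have "\<bar>1 + (x - t)\<bar> \<le> 2" using x by auto
      then show "cmod (complex_of_real (1 + (x - t))) \<le> 2" by (simp only: norm_of_real)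
    qed
  qed simp
  also have "\<dots> \<le> 2" using N_le[OF n] x by simp
  finally show ?thesis .
qed



definition one :: fn where "one = (\<lambda>_. 1)"

lemma one_L2: "one \<in> L2"
  by (rule L2_bounded[where B=1]) (auto simp: one_def)

lemma l2norm_one: "l2norm one = 1"
  by (simp add: l2norm_def one_def int_const_M01 measure_M01)

lemma V_one: assumes "0 \<le> y" shows "volterra one y = complex_of_real y"
proof -
  have "(\<lambda>t. indicator {0..y} t *\<^sub>R one t) = (\<lambda>t. complex_of_real (indicator {0..y} t))"
    by (simp add: fun_eq_iff scaleR_conv_of_real one_def)
  then show ?thesis using assms by (simp add: V_def' int_ind_Icc)
qed

lemma VV_one: assumes x: "x \<in> {0..1}" shows "volterra (volterra one) x = complex_of_real (x\<^sup>2 / 2)"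
proof -
  have "volterra (volterra one) x = (\<integral>t. complex_of_real (t ^ 1 * indicator {0..x} t) \<partial>lborel)"
    unfolding V_def'[of "volterra one"]
  proof (rule Bochner_Integration.integral_cong)
    fix t
    show "indicator {0..x} t *\<^sub>R volterra one t = complex_of_real (t ^ 1 * indicator {0..x} t)"
      by (cases "t \<in> {0..x}") (auto simp: V_one scaleR_conv_of_real)
  qed simp
  also have "\<dots> = complex_of_real (x\<^sup>2 / 2)"
  proof -
    have "(\<integral>t. t ^ 1 * indicator {0..x} t \<partial>lborel) = x\<^sup>2 / 2"
      using integral_power[of 0 x 1] x by (simp add: power2_eq_square)
    then show ?thesis by (simp only: integral_complex_of_real)
  qed
  finally show ?thesis .
qed

lemma W_one: assumes x: "x \<in> {0..1}" shows "(cmod (Wop one x))\<^sup>2 = (x + x\<^sup>2 / 2)\<^sup>2"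
proof -
  have "Wop one x = - complex_of_real (x + x\<^sup>2 / 2)"
    using x by (simp add: W_eval V_one VV_one)
  then have "cmod (Wop one x) = \<bar>x + x\<^sup>2 / 2\<bar>" by (simp only: norm_minus_cancel norm_of_real)
  also have "\<dots> = x + x\<^sup>2 / 2" using x by simp
  finally show ?thesis by simp
qed

lemma l2norm_W_one: "l2norm (Wop one) = sqrt (19 / 30)"
proof -
  have "(\<integral>x. (cmod (Wop one x))\<^sup>2 \<partial>M01) = (\<integral>x. (x + x\<^sup>2 / 2)\<^sup>2 \<partial>M01)"
    by (rule Bochner_Integration.integral_cong) (auto simp: W_one)
  then show ?thesis by (simp add: l2norm_def int_poly2)
qed

lemma opnorm_S: "opnorm Sop \<le> sqrt (7 / 12)"
  unfolding opnorm_def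
proof (rule cSup_least)
  show "{l2norm (Sop f) |f. f \<in> L2 \<and> l2norm f \<le> 1} \<noteq> {}"
    using one_L2 l2norm_one by auto
  fix y assume "y \<in> {l2norm (Sop f) |f. f \<in> L2 \<and> l2norm f \<le> 1}"
  then obtain f where f: "f \<in> L2" "l2norm f \<le> 1" and y: "y = l2norm (Sop f)" by blast
  have bi: "integrable M01 (\<lambda>x. ((x + 1) / 2)\<^sup>2)"
  proof (rule finite_measure.integrable_const_bound[OF finite_M01, where B=1])
    show "AE x in M01. norm (((x + 1) / 2)\<^sup>2) \<le> (1::real)"
    proof (rule AE_I2)
      fix x assume "x \<in> space M01"
      then have "0 \<le> (x + 1) / 2" "(x + 1) / 2 \<le> 1" by auto
      then show "norm (((x + 1) / 2)\<^sup>2) \<le> (1::real)" by (simp add: power_le_one)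
    qed
    show "(\<lambda>x. ((x + 1) / 2)\<^sup>2) \<in> borel_measurable M01" by (rule poly_meas_M01) measurable
  qed
  have "l2norm (Sop f) \<le> sqrt (\<integral>x. ((x + 1) / 2)\<^sup>2 \<partial>M01)"
    by (rule l2norm_le[OF _ _ _ bi]) (use f AV_L2[OF S_AV] S_pt in auto)
  then show "y \<le> sqrt (7 / 12)" using y by (simp add: int_poly1)
qed

lemma W_le2: assumes "f \<in> L2" "l2norm f \<le> 1" shows "l2norm (Wop f) \<le> 2"
proof -
  have bi: "integrable M01 (\<lambda>x::real. (2::real)\<^sup>2)"
    by (rule finite_measure.integrable_const[OF finite_M01])
  have "l2norm (Wop f) \<le> sqrt (\<integral>x. (2::real)\<^sup>2 \<partial>M01)"
    by (rule l2norm_le[OF _ _ _ bi]) (use assms W_L2 W_pt in auto)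
  then show ?thesis by (simp add: int_const_M01 measure_M01)
qed

lemma opnorm_W: "sqrt (19 / 30) \<le> opnorm Wop"
  unfolding opnorm_def
proof (rule cSup_upper)
  show "sqrt (19 / 30) \<in> {l2norm (Wop f) |f. f \<in> L2 \<and> l2norm f \<le> 1}"
    using one_L2 l2norm_one l2norm_W_one by (metis (mono_tags, lifting) mem_Collect_eq order_refl)
  show "bdd_above {l2norm (Wop f) |f. f \<in> L2 \<and> l2norm f \<le> 1}"
    by (rule bdd_aboveI[where M=2]) (auto intro: W_le2)
qed

theorem mainTheorem16:
  shows "\<not> (\<exists>\<gamma>. gauge_action \<gamma>)"
proof
  assume "\<exists>\<gamma>. gauge_action \<gamma>"
  then obtain \<gamma> where ga: "gauge_action \<gamma>" by blast
  have m1: "cmod (-1::complex) = 1" by simp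
  have all: "\<forall>z. cmod z = 1 \<longrightarrow>
        (\<forall>S\<in>AV. \<gamma> z S \<in> AV)
      \<and> (\<forall>S\<in>AV. \<forall>T\<in>AV. opeq S T \<longrightarrow> opeq (\<gamma> z S) (\<gamma> z T))
      \<and> (\<forall>S\<in>AV. \<forall>T\<in>AV. opeq (\<gamma> z (op_add S T)) (op_add (\<gamma> z S) (\<gamma> z T)))
      \<and> (\<forall>c. \<forall>S\<in>AV. opeq (\<gamma> z (op_scale c S)) (op_scale c (\<gamma> z S)))
      \<and> (\<forall>S\<in>AV. \<forall>T\<in>AV. opeq (\<gamma> z (S \<circ> T)) (\<gamma> z S \<circ> \<gamma> z T))
      \<and> (\<forall>S\<in>AV. \<forall>T\<in>AV. opeq (\<gamma> z S) (\<gamma> z T) \<longrightarrow> opeq S T)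
      \<and> (\<forall>T\<in>AV. \<exists>S\<in>AV. opeq (\<gamma> z S) T)
      \<and> (\<forall>S\<in>AV. opnorm (\<gamma> z S) = opnorm S)
      \<and> opeq (\<gamma> z volterra) (op_scale z volterra)"
    using ga unfolding gauge_action_def by (rule conjunct1)
  note H = mp[OF spec[OF all, of "-1"] m1]
  define g where "g = \<gamma> (-1)"
  have h_mem: "\<forall>S\<in>AV. g S \<in> AV" using H by (simp add: g_def)
  have h_add: "\<forall>S\<in>AV. \<forall>T\<in>AV. opeq (g (op_add S T)) (op_add (g S) (g T))" using H by (simp add: g_def)
  have h_scale: "\<forall>c. \<forall>S\<in>AV. opeq (g (op_scale c S)) (op_scale c (g S))" using H by (simp add: g_def)
  have h_comp: "\<forall>S\<in>AV. \<forall>T\<in>AV. opeq (g (S \<circ> T)) (g S \<circ> g T)" using H by (simp add: g_def)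
  have h_norm: "\<forall>S\<in>AV. opnorm (g S) = opnorm S" using H by (simp add: g_def)
  have h_V: "opeq (g volterra) (op_scale (-1) volterra)" using H by (simp add: g_def)
  define A where "A = op_scale (-1) volterra"
  have gV: "g volterra \<in> AV" using h_mem V_AV by blast
  have A_L2: "\<forall>f\<in>L2. A f \<in> L2"
  proof
    fix f assume f: "f \<in> L2"
    show "A f \<in> L2" unfolding A_def op_scale_def by (rule L2_scale[OF V_L2[OF f]])
  qed
  have e1: "opeq (g Sop) (op_add (g volterra) (g (op_scale (-1) (volterra \<circ> volterra))))"
    unfolding Sop_def using h_add V_AV mVV_AV by blast
  have e2: "opeq (g (op_scale (-1) (volterra \<circ> volterra))) (op_scale (-1) (g (volterra \<circ> volterra)))"
    using h_scale VV_AV by blast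
  have e3: "opeq (g (volterra \<circ> volterra)) (g volterra \<circ> g volterra)"
    using h_comp V_AV by blast
  have e4: "opeq (g volterra \<circ> g volterra) (A \<circ> A)"
    by (rule opeq_comp) (use h_V A_L2 AV_L2[OF gV] AV_resp[OF gV] in \<open>simp_all add: A_def\<close>)
  have e5: "opeq (g Sop) Wop"
    unfolding Wop_def A_def[symmetric]
    by (rule opeq_trans[OF e1 opeq_add[OF h_V[folded A_def] opeq_trans[OF e2 opeq_scale[OF opeq_trans[OF e3 e4]]]]])
  have "opnorm (g Sop) = opnorm Wop"
    by (rule opnorm_cong[OF e5]) (use AV_L2[OF bspec[OF h_mem S_AV]] W_L2 in auto)
  moreover have "opnorm (g Sop) = opnorm Sop" using h_norm S_AV by blast
  ultimately have "opnorm Wop = opnorm Sop" by simp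
  then have "sqrt (19 / 30) \<le> sqrt (7 / 12)" using opnorm_W opnorm_S by linarith
  then show False by simp
qed

end
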